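(* Let $H(s)=K\,\frac{\prod_{i=1}^{n}(s-z_i)}{\prod_{i=1}^{n}(s-p_i)}$ with $K>0$ and real zeros $z=(z_1,\dots,z_n)\in\mathbb{R}^n$ and real poles $p=(p_1,\dots,p_n)\in\mathbb{R}^n$ (so the numerator and denominator have the same degree $n$). Suppose there exist $\mu\in\mathbb{N}=\{1,2,\dots\}$ and $\delta>-\min_{i,j}\{p_i,z_j\}$ such that $$(p+\delta)^{\mu}\succ_w (z+\delta)^{\mu}$$ and $$\sum_{i=1}^n (p_i+\delta)^k\geq \sum_{i=1}^n (z_i+\delta)^k\quad\text{for all }k\in\{1,\dots,\mu-1\}.$$ Then $H$ is logarithmically completely monotonic.
   Context: For $x\in\mathbb{R}^n$ and scalar $\delta$, $(x+\delta)^\mu$ denotes the vector with components $(x_i+\delta)^\mu$. For $x\in\mathbb{R}^n$, $x^{\downarrow}$ is the vector of its components sorted in descending order; $x\succ_w y$ (weak majorization) means $\sum_{i=1}^k x^{\downarrow}_i\geq\sum_{i=1}^k y^{\downarrow}_i$ for all $k=1,\dots,n$. $H$ is logarithmically completely monotonic (LCM) if $H(s)>0$ and $(-1)^k[\log H(s)]^{(k)}\geq 0$ for all $k\in\{1,2,\dots\}$ and all $s\in(\sigma(H),+\infty)$, where $\sigma(H)=\max_i p_i$. *)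

theory Defs
  imports "HOL-Analysis.Analysis"
begin

text \<open>Vectors in R^n are represented as real lists of length n.\<close>

definition desc :: "real list \<Rightarrow> real list" where
  "desc x = rev (sort x)"

definition weak_majorizes :: "real list \<Rightarrow> real list \<Rightarrow> bool" (infix "\<succ>\<^sub>w" 50) where
  "x \<succ>\<^sub>w y \<longleftrightarrow> (\<forall>k\<in>{1..length x}. sum_list (take k (desc x)) \<ge> sum_list (take k (desc y)))"

definition rat_fun :: "real \<Rightarrow> real list \<Rightarrow> real list \<Rightarrow> real \<Rightarrow> real" where
  "rat_fun K z p s = K * prod_list (map (\<lambda>zi. s - zi) z) / prod_list (map (\<lambda>pi. s - pi) p)"

definition sigma :: "real list \<Rightarrow> real" where
  "sigma p = Max (set p)"

definition log_compl_mono :: "(real \<Rightarrow> real) \<Rightarrow> real \<Rightarrow> bool" where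
  "log_compl_mono H sig \<longleftrightarrow> (\<forall>s. s > sig \<longrightarrow> H s > 0 \<and>
      (\<forall>k::nat. k \<ge> 1 \<longrightarrow> (-1) ^ k * (deriv ^^ k) (\<lambda>t. ln (H t)) s \<ge> 0))"

end

theory Submission
  imports Defs
begin

lemma abel_nonneg:
  fixes c d :: "nat \<Rightarrow> real"
  assumes mono: "\<And>i j. i \<le> j \<Longrightarrow> j < n \<Longrightarrow> c j \<le> c i"
    and pos: "\<And>i. i < n \<Longrightarrow> 0 \<le> c i"
    and part: "\<And>k. k \<le> n \<Longrightarrow> 0 \<le> (\<Sum>i<k. d i)"
  shows "0 \<le> (\<Sum>i<n. c i * d i)"
proof -
  have main: "\<forall>e. 0 \<le> e \<longrightarrow> (\<forall>i<m. e \<le> c i) \<longrightarrow> e * (\<Sum>i<m. d i) \<le> (\<Sum>i<m. c i * d i)"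
    if "m \<le> n" for m
    using that
  proof (induction m)
    case 0
    then show ?case by simp
  next
    case (Suc m)
    show ?case
    proof (intro allI impI)
      fix e :: real
      assume e0: "0 \<le> e" and ec: "\<forall>i<Suc m. e \<le> c i"
      have cm: "\<forall>i<m. c m \<le> c i" using mono Suc.prems by auto
      have IH: "c m * (\<Sum>i<m. d i) \<le> (\<Sum>i<m. c i * d i)"
        using Suc.IH Suc.prems cm pos by auto
      have "e * (\<Sum>i<Suc m. d i) \<le> c m * (\<Sum>i<Suc m. d i)"
        using ec part[of "Suc m"] Suc.prems by (intro mult_right_mono) auto
      also have "\<dots> = c m * (\<Sum>i<m. d i) + c m * d m" by (simp add: algebra_simps)
      also have "\<dots> \<le> (\<Sum>i<Suc m. c i * d i)" using IH by simp
      finally show "e * (\<Sum>i<Suc m. d i) \<le> (\<Sum>i<Suc m. c i * d i)" .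
    qed
  qed
  have "0 * (\<Sum>i<n. d i) \<le> (\<Sum>i<n. c i * d i)" using main[of n] pos by blast
  then show ?thesis by simp
qed

lemma powr_tangent:
  fixes x y r :: real
  assumes "0 < x" "0 < y" "1 \<le> r"
  shows "r * y powr (r - 1) * (x - y) \<le> x powr r - y powr r"
proof -
  have "((\<lambda>x. x powr r) has_field_derivative r * y powr (r - 1)) (at y within {0<..})"
    using has_real_derivative_powr[OF assms(2)] by (rule has_field_derivative_at_within)
  then show ?thesis
    using convex_on_imp_above_tangent[OF powr_convex[OF assms(3)], of y x] assms
    by (auto simp: interior_open)
qed

lemma sum_list_take_nth:
  fixes xs :: "real list"
  assumes "k \<le> length xs"
  shows "sum_list (take k xs) = (\<Sum>i<k. xs ! i)"
  using assms by (simp add: sum_list_sum_nth atLeast0LessThan min_absorb2)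

lemma sum_list_map_nth:
  fixes xs :: "real list"
  shows "sum_list (map f xs) = (\<Sum>i<length xs. f (xs ! i))"
  by (simp add: sum_list_sum_nth atLeast0LessThan)

lemma majorization_powr:
  fixes X Y :: "real list" and r :: real
  assumes len: "length X = length Y"
    and posX: "\<forall>x\<in>set X. 0 < x" and posY: "\<forall>y\<in>set Y. 0 < y"
    and sortY: "sorted_wrt (\<ge>) Y"
    and maj: "\<forall>k\<le>length Y. sum_list (take k Y) \<le> sum_list (take k X)"
    and r: "1 \<le> r"
  shows "sum_list (map (\<lambda>u. u powr r) Y) \<le> sum_list (map (\<lambda>u. u powr r) X)"
proof -
  define n where "n = length Y"
  define c where "c i = r * (Y ! i) powr (r - 1)" for i
  define d where "d i = X ! i - Y ! i" for i
  have "0 \<le> (\<Sum>i<n. c i * d i)"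
  proof (rule abel_nonneg)
    fix i j assume "i \<le> j" "j < n"
    then have "Y ! j \<le> Y ! i" using sortY n_def
      by (metis order.refl le_neq_implies_less sorted_wrt_nth_less)
    moreover have "0 < Y ! j" using posY \<open>j < n\<close> n_def by auto
    ultimately show "c j \<le> c i" unfolding c_def using r
      by (intro mult_left_mono powr_mono2) auto
  next
    fix i assume "i < n" then show "0 \<le> c i" unfolding c_def using r by auto
  next
    fix k assume k: "k \<le> n"
    have "(\<Sum>i<k. d i) = sum_list (take k X) - sum_list (take k Y)"
      unfolding d_def using k len n_def by (simp add: sum_list_take_nth sum_subtractf)
    then show "0 \<le> (\<Sum>i<k. d i)" using maj k n_def by auto
  qed
  also have "\<dots> \<le> (\<Sum>i<n. (X ! i) powr r - (Y ! i) powr r)"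
  proof (rule sum_mono)
    fix i assume "i \<in> {..<n}"
    then have "0 < X ! i" "0 < Y ! i" using posX posY len n_def by auto
    then show "c i * d i \<le> (X ! i) powr r - (Y ! i) powr r"
      unfolding c_def d_def using powr_tangent r by auto
  qed
  finally show ?thesis using len n_def by (simp add: sum_list_map_nth sum_subtractf)
qed

lemma desc_sorted: "sorted_wrt (\<ge>) (desc x)"
  unfolding desc_def sorted_wrt_rev using sorted_sort[of x] by simp

lemma desc_mset: "mset (desc x) = mset x"
  unfolding desc_def by simp

lemma sum_list_map_desc:
  fixes f :: "real \<Rightarrow> real"
  shows "sum_list (map f (desc x)) = sum_list (map f x)"
proof -
  have "mset (map f (desc x)) = mset (map f x)" by (simp add: desc_mset)
  then have "sum_mset (mset (map f (desc x))) = sum_mset (mset (map f x))" by (rule arg_cong)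
  then show ?thesis by (simp only: sum_mset_sum_list)
qed

lemma set_desc: "set (desc x) = set x"
  using arg_cong[OF desc_mset[of x], of set_mset] by simp

lemma length_desc: "length (desc x) = length x"
  using arg_cong[OF desc_mset[of x], of size] by simp


definition bcoef :: "nat \<Rightarrow> nat \<Rightarrow> real" where
  "bcoef k m = ((- real k) gchoose m) * (-1) ^ m"

lemma bcoef_series:
  fixes u :: real
  assumes "\<bar>u\<bar> < 1"
  shows "(\<lambda>m. bcoef k m * u ^ m) sums (1 / (1 - u) ^ k)"
proof -
  have "(\<lambda>m. ((- real k) gchoose m) * (- u) ^ m) sums (1 + - u) powr (- real k)"
    by (rule gen_binomial_real) (use assms in simp)
  moreover have "(1 + - u) powr (- real k) = 1 / (1 - u) ^ k"
  proof -
    have u: "0 < 1 - u" using assms by simp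
    have "(1 + - u) powr (- real k) = inverse ((1 - u) powr real k)"
      by (simp add: powr_minus)
    also have "\<dots> = inverse ((1 - u) ^ k)" using u by (simp only: powr_realpow)
    finally show ?thesis by (simp add: divide_inverse)
  qed
  moreover have "((- real k) gchoose m) * (- u) ^ m = bcoef k m * u ^ m" for m
  proof -
    have "(- u) ^ m = (-1) ^ m * u ^ m" by (rule power_minus)
    then show ?thesis unfolding bcoef_def by (simp only: mult.assoc)
  qed
  ultimately show ?thesis by simp
qed

lemma bcoef_nonneg:
  assumes "1 \<le> k"
  shows "0 \<le> bcoef k m"
proof -
  have sq: "((-1::real) ^ m * (-1) ^ m) = 1"
    by (induction m) auto
  have r: "real k + real m - 1 = real (k + m - 1)" using assms by (simp add: of_nat_diff)
  have "bcoef k m = ((-1) ^ m * ((real k + real m - 1) gchoose m)) * (-1) ^ m"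
    unfolding bcoef_def by (simp only: gbinomial_minus)
  also have "\<dots> = (real (k + m - 1) gchoose m) * ((-1) ^ m * (-1) ^ m)"
    by (simp only: r mult.commute mult.left_commute)
  also have "\<dots> = real ((k + m - 1) choose m)"
    by (simp only: sq mult_1_right binomial_gbinomial)
  finally show ?thesis by (simp only: of_nat_0_le_iff)
qed

lemma list_series:
  fixes as :: "real list" and t :: real
  assumes "0 < t" "\<forall>a\<in>set as. 0 < a \<and> a < t"
  shows "(\<lambda>m. bcoef k m * (\<Sum>a\<leftarrow>as. a ^ m) / t ^ m) sums (\<Sum>a\<leftarrow>as. 1 / (1 - a / t) ^ k)"
  using assms(2)
proof (induction as)
  case Nil
  then show ?case by simp
next
  case (Cons a as)
  have "\<bar>a / t\<bar> < 1" using Cons.prems assms(1) by auto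
  then have s1: "(\<lambda>m. bcoef k m * (a / t) ^ m) sums (1 / (1 - a / t) ^ k)"
    by (rule bcoef_series)
  have s2: "(\<lambda>m. bcoef k m * (\<Sum>a\<leftarrow>as. a ^ m) / t ^ m) sums (\<Sum>a\<leftarrow>as. 1 / (1 - a / t) ^ k)"
    using Cons by simp
  have "(\<lambda>m. bcoef k m * (a / t) ^ m + bcoef k m * (\<Sum>a\<leftarrow>as. a ^ m) / t ^ m) sums
      (1 / (1 - a / t) ^ k + (\<Sum>a\<leftarrow>as. 1 / (1 - a / t) ^ k))"
    using s1 s2 by (rule sums_add)
  moreover have "bcoef k m * (a / t) ^ m + bcoef k m * (\<Sum>a\<leftarrow>as. a ^ m) / t ^ m
      = bcoef k m * (\<Sum>a\<leftarrow>a # as. a ^ m) / t ^ m" for m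
    by (simp add: power_divide algebra_simps add_divide_distrib)
  ultimately show ?case by simp
qed

lemma sum_list_cmult: "(\<Sum>a\<leftarrow>xs. (c::real) * f a) = c * (\<Sum>a\<leftarrow>xs. f a)"
  by (induction xs) (auto simp: algebra_simps)

lemma power_sum_ineq:
  fixes P Z :: "real list" and t :: real and k :: nat
  assumes t: "0 < t" and k: "1 \<le> k"
    and P: "\<forall>a\<in>set P. 0 < a \<and> a < t" and Z: "\<forall>a\<in>set Z. 0 < a \<and> a < t"
    and pow: "\<forall>m. (\<Sum>a\<leftarrow>Z. a ^ m) \<le> (\<Sum>a\<leftarrow>P. a ^ m)"
  shows "(\<Sum>a\<leftarrow>Z. 1 / (t - a) ^ k) \<le> (\<Sum>a\<leftarrow>P. 1 / (t - a) ^ k)"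
proof -
  have eq: "(\<Sum>a\<leftarrow>xs. 1 / (t - a) ^ k) = (1 / t ^ k) * (\<Sum>a\<leftarrow>xs. 1 / (1 - a / t) ^ k)" for xs
  proof -
    have h: "1 / (t - a) ^ k = (1 / t ^ k) * (1 / (1 - a / t) ^ k)" for a
    proof -
      have "t - a = t * (1 - a / t)" using t by (simp add: field_simps)
      then show ?thesis by (simp add: power_mult_distrib)
    qed
    have "(\<Sum>a\<leftarrow>xs. 1 / (t - a) ^ k) = (\<Sum>a\<leftarrow>xs. (1 / t ^ k) * (1 / (1 - a / t) ^ k))"
      by (simp only: h)
    then show ?thesis by (simp only: sum_list_cmult)
  qed
  have "(\<Sum>a\<leftarrow>Z. 1 / (1 - a / t) ^ k) \<le> (\<Sum>a\<leftarrow>P. 1 / (1 - a / t) ^ k)"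
  proof (rule sums_le[OF _ list_series[OF t Z] list_series[OF t P]])
    fix m
    show "bcoef k m * (\<Sum>a\<leftarrow>Z. a ^ m) / t ^ m \<le> bcoef k m * (\<Sum>a\<leftarrow>P. a ^ m) / t ^ m"
      using bcoef_nonneg[OF k, of m] pow t
      by (intro divide_right_mono mult_left_mono) auto
  qed
  then show ?thesis unfolding eq using t by (intro mult_left_mono) auto
qed


lemma prod_list_pos:
  assumes "\<forall>x\<in>set xs. x < (s::real)"
  shows "0 < prod_list (map (\<lambda>x. s - x) xs)"
  using assms by (induction xs) auto

lemma ln_prod_list:
  assumes "\<forall>x\<in>set xs. x < (s::real)"
  shows "ln (prod_list (map (\<lambda>x. s - x) xs)) = (\<Sum>x\<leftarrow>xs. ln (s - x))"
  using assms
proof (induction xs)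
  case Nil
  then show ?case by simp
next
  case (Cons a xs)
  then have "0 < prod_list (map (\<lambda>x. s - x) xs)" by (intro prod_list_pos) auto
  with Cons show ?case by (simp add: ln_mult)
qed

lemma deriv_ln_sum:
  assumes "\<forall>x\<in>set xs. x < (s::real)"
  shows "((\<lambda>t. \<Sum>x\<leftarrow>xs. ln (t - x)) has_real_derivative (\<Sum>x\<leftarrow>xs. 1 / (s - x) ^ 1)) (at s)"
  using assms
proof (induction xs)
  case Nil
  then show ?case by simp
next
  case (Cons a xs)
  have "((\<lambda>t. ln (t - a)) has_real_derivative (1 / (s - a) ^ 1)) (at s)"
    using Cons.prems by (auto intro!: derivative_eq_intros)
  from DERIV_add[OF this Cons.IH] Cons.prems show ?case by simp
qed

lemma aux_pow:
  fixes b :: real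
  assumes "b \<noteq> 0"
  shows "- (real (Suc j) * b ^ j * inverse ((b ^ Suc j) ^ Suc (Suc 0))) = - real (Suc j) * (1 / b ^ Suc (Suc j))"
proof -
  have e: "(b ^ Suc j) ^ Suc (Suc 0) = b ^ Suc (Suc j) * b ^ j"
    by (simp add: power_Suc algebra_simps)
  have "b ^ j \<noteq> 0" using assms by simp
  then show ?thesis unfolding e using assms by (simp add: field_simps)
qed

lemma deriv_inv_sum:
  assumes "\<forall>x\<in>set xs. x < (s::real)"
  shows "((\<lambda>t. \<Sum>x\<leftarrow>xs. 1 / (t - x) ^ k) has_real_derivative
           (- real k * (\<Sum>x\<leftarrow>xs. 1 / (s - x) ^ Suc k))) (at s)"
  using assms
proof (induction xs)
  case Nil
  then show ?case by simp
next
  case (Cons a xs)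
  have a: "s - a \<noteq> 0" using Cons.prems by auto
  have "((\<lambda>t. 1 / (t - a) ^ k) has_real_derivative (- real k * (1 / (s - a) ^ Suc k))) (at s)"
  proof (cases k)
    case 0
    then show ?thesis by simp
  next
    case (Suc j)
    have d1: "((\<lambda>t. (t - a) ^ k) has_real_derivative real k * (s - a) ^ j) (at s)"
    proof -
      have "((\<lambda>t. (t - a) ^ k) has_real_derivative real k * ((1 - 0) * (s - a) ^ (k - Suc 0))) (at s)"
        by (intro DERIV_power DERIV_diff DERIV_ident DERIV_const)
      then show ?thesis unfolding Suc by simp
    qed
    have d2: "((\<lambda>t. inverse ((t - a) ^ k)) has_real_derivative
        - (real k * (s - a) ^ j * inverse (((s - a) ^ k) ^ Suc (Suc 0)))) (at s)"
      using DERIV_inverse_fun[OF d1] a by simp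
    have e: "- (real k * (s - a) ^ j * inverse (((s - a) ^ k) ^ Suc (Suc 0)))
        = - real k * (1 / (s - a) ^ Suc k)"
      unfolding Suc using a by (rule aux_pow)
    show ?thesis using d2 unfolding e by (simp add: divide_inverse)
  qed
  from DERIV_add[OF this Cons.IH] Cons.prems show ?case by (simp add: algebra_simps)
qed


lemma powr_pow_id:
  fixes y :: real and m \<mu> :: nat
  assumes "0 < y" "1 \<le> \<mu>"
  shows "(y ^ \<mu>) powr (real m / real \<mu>) = y ^ m"
proof -
  have "(y ^ \<mu>) powr (real m / real \<mu>) = (y powr real \<mu>) powr (real m / real \<mu>)"
    using assms by (simp add: powr_realpow)
  also have "\<dots> = y powr (real \<mu> * (real m / real \<mu>))" by (simp add: powr_powr)
  also have "\<dots> = y powr real m" using assms by simp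
  also have "\<dots> = y ^ m" using assms by (simp add: powr_realpow)
  finally show ?thesis .
qed

theorem theorem1:
  fixes K \<delta> :: real and z p :: "real list" and \<mu> :: nat
  assumes "K > 0"
    and "length z = length p"
    and "\<mu> \<ge> 1"
    and "\<delta> > - Min (set p \<union> set z)"
    and "map (\<lambda>x. (x + \<delta>) ^ \<mu>) p \<succ>\<^sub>w map (\<lambda>x. (x + \<delta>) ^ \<mu>) z"
    and "\<forall>k\<in>{1..<\<mu>}. (\<Sum>x\<leftarrow>p. (x + \<delta>) ^ k) \<ge> (\<Sum>x\<leftarrow>z. (x + \<delta>) ^ k)"
  shows "log_compl_mono (rat_fun K z p) (sigma p)"
proof -
  note K = assms(1) and len = assms(2) and mu = assms(3) and del = assms(4)
    and wm = assms(5) and low = assms(6)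
  define A where "A = set p \<union> set z"
  have finA: "finite A" unfolding A_def by simp
  have posA: "0 < x + \<delta>" if "x \<in> A" for x
  proof -
    have "Min A \<le> x" using finA that by simp
    then show ?thesis using del unfolding A_def by linarith
  qed
  define f where "f x = (x + \<delta>) ^ \<mu>" for x
  define X where "X = desc (map f p)"
  define Y where "Y = desc (map f z)"
  have lenXY: "length X = length Y" "length Y = length z"
    unfolding X_def Y_def using len by (simp_all add: length_desc)
  have setX: "set X = f ` set p" and setY: "set Y = f ` set z"
    unfolding X_def Y_def by (simp_all add: set_desc)
  have posX: "\<forall>x\<in>set X. 0 < x" unfolding setX f_def using posA A_def by auto
  have posY: "\<forall>x\<in>set Y. 0 < x" unfolding setY f_def using posA A_def by auto
  have sortY: "sorted_wrt (\<ge>) Y" unfolding Y_def by (rule desc_sorted)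
  have majXY: "\<forall>k\<le>length Y. sum_list (take k Y) \<le> sum_list (take k X)"
  proof (intro allI impI)
    fix k assume k: "k \<le> length Y"
    show "sum_list (take k Y) \<le> sum_list (take k X)"
    proof (cases "k = 0")
      case True then show ?thesis by simp
    next
      case False
      then have "k \<in> {1..length (map f p)}" using k lenXY len by auto
      then show ?thesis using wm unfolding weak_majorizes_def X_def Y_def f_def by blast
    qed
  qed
  have powsum: "(\<Sum>x\<leftarrow>z. (x + \<delta>) ^ m) \<le> (\<Sum>x\<leftarrow>p. (x + \<delta>) ^ m)" for m
  proof (cases "m = 0")
    case True
    then show ?thesis using len by (simp add: sum_list_triv)
  next
    case False
    show ?thesis
    proof (cases "m < \<mu>")
      case True
      then show ?thesis using low False by auto
    next
      case False
      define r where "r = real m / real \<mu>"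
      have r1: "1 \<le> r" unfolding r_def using False mu by auto
      have conv: "(\<Sum>x\<leftarrow>xs. (x + \<delta>) ^ m) = (\<Sum>u\<leftarrow>desc (map f xs). u powr r)"
        if "set xs \<subseteq> A" for xs
      proof -
        have "(\<Sum>x\<leftarrow>xs. (x + \<delta>) ^ m) = (\<Sum>x\<leftarrow>xs. (f x) powr r)"
        proof (rule arg_cong[where f = sum_list], rule map_cong[OF refl])
          fix x assume "x \<in> set xs"
          then have "0 < x + \<delta>" using that posA by auto
          then show "(x + \<delta>) ^ m = f x powr r" unfolding f_def r_def
            using powr_pow_id[of "x + \<delta>" \<mu> m] mu by simp
        qed
        also have "\<dots> = (\<Sum>u\<leftarrow>map f xs. u powr r)" by (simp add: o_def)
        also have "\<dots> = (\<Sum>u\<leftarrow>desc (map f xs). u powr r)" by (simp only: sum_list_map_desc)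
        finally show ?thesis .
      qed
      have "(\<Sum>x\<leftarrow>z. (x + \<delta>) ^ m) = (\<Sum>u\<leftarrow>Y. u powr r)"
        unfolding Y_def using conv[of z] A_def by auto
      also have "\<dots> \<le> (\<Sum>u\<leftarrow>X. u powr r)"
        by (rule majorization_powr[OF lenXY(1) posX posY sortY majXY r1])
      also have "\<dots> = (\<Sum>x\<leftarrow>p. (x + \<delta>) ^ m)"
        unfolding X_def using conv[of p] A_def by auto
      finally show ?thesis .
    qed
  qed
  have zle: "\<exists>y\<in>set p. x \<le> y" if xz: "x \<in> set z" for x
  proof -
    have ne: "0 < length Y" using xz lenXY by (cases z) auto
    have "sum_list (take 1 Y) \<le> sum_list (take 1 X)" using majXY ne by (simp add: Suc_leI)
    then have Y0X0: "Y ! 0 \<le> X ! 0" using ne lenXY by (simp add: sum_list_take_nth)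
    have "f x \<in> set Y" using xz setY by auto
    then obtain j where j: "j < length Y" "Y ! j = f x" by (metis in_set_conv_nth)
    have "Y ! j \<le> Y ! 0"
      using sortY j by (cases "j = 0") (auto dest: sorted_wrt_nth_less)
    moreover have "X ! 0 \<in> set X" using ne lenXY by simp
    then obtain y where y: "y \<in> set p" "X ! 0 = f y" using setX by auto
    ultimately have "f x \<le> f y" using Y0X0 j by simp
    then have "(x + \<delta>) ^ Suc (\<mu> - 1) \<le> (y + \<delta>) ^ Suc (\<mu> - 1)" unfolding f_def using mu by simp
    moreover have "0 \<le> y + \<delta>" using posA[of y] y A_def by force
    ultimately have "x + \<delta> \<le> y + \<delta>" by (rule power_le_imp_le_base)
    then show ?thesis using y by auto
  qed
  define S where "S = {s. \<forall>x\<in>A. x < s}"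
  have S_eq: "S = (\<Inter>x\<in>A. {x<..})" unfolding S_def by auto
  have openS: "open S" unfolding S_eq using finA by (intro open_INT) auto
  have sigS: "s \<in> S" if "s > sigma p" for s
  proof -
    have "x < s" if "x \<in> set p" for x
      using that \<open>s > sigma p\<close> unfolding sigma_def by (meson Max_ge List.finite_set le_less_trans)
    moreover have "x < s" if "x \<in> set z" for x
      using zle[OF that] \<open>\<And>x. x \<in> set p \<Longrightarrow> x < s\<close> by fastforce
    ultimately show ?thesis unfolding S_def A_def by auto
  qed
  define Sz where "Sz k t = (\<Sum>x\<leftarrow>z. 1 / (t - x) ^ k)" for k t
  define Sp where "Sp k t = (\<Sum>x\<leftarrow>p. 1 / (t - x) ^ k)" for k t
  define G where "G j t = (-1) ^ j * fact j * (Sz (Suc j) t - Sp (Suc j) t)" for j t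
  define L where "L t = ln (rat_fun K z p t)" for t
  define L' where "L' t = ln K + (\<Sum>x\<leftarrow>z. ln (t - x)) - (\<Sum>x\<leftarrow>p. ln (t - x))" for t
  have Sz_lt: "\<forall>x\<in>set z. x < t" and Sp_lt: "\<forall>x\<in>set p. x < t" if "t \<in> S" for t
    using that unfolding S_def A_def by auto
  have Hpos: "0 < rat_fun K z p t" if "t \<in> S" for t
    unfolding rat_fun_def using K prod_list_pos[OF Sz_lt[OF that]] prod_list_pos[OF Sp_lt[OF that]]
    by simp
  have LL': "L t = L' t" if "t \<in> S" for t
    unfolding L_def L'_def rat_fun_def
    using K prod_list_pos[OF Sz_lt[OF that]] prod_list_pos[OF Sp_lt[OF that]]
      ln_prod_list[OF Sz_lt[OF that]] ln_prod_list[OF Sp_lt[OF that]]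
    by (simp add: ln_mult ln_div)
  have Gder: "(G j has_real_derivative G (Suc j) t) (at t)" if "t \<in> S" for j t
  proof -
    have "(G j has_real_derivative
        (-1) ^ j * fact j * (- real (Suc j) * Sz (Suc (Suc j)) t - - real (Suc j) * Sp (Suc (Suc j)) t)) (at t)"
      unfolding G_def[abs_def] Sz_def Sp_def
      by (intro DERIV_cmult DERIV_diff deriv_inv_sum Sz_lt[OF that] Sp_lt[OF that])
    moreover have "(-1) ^ j * fact j * (- real (Suc j) * Sz (Suc (Suc j)) t - - real (Suc j) * Sp (Suc (Suc j)) t)
        = G (Suc j) t"
      unfolding G_def by (simp add: algebra_simps)
    ultimately show ?thesis by simp
  qed
  have L'der: "(L' has_real_derivative G 0 t) (at t)" if "t \<in> S" for t
  proof -
    have "(L' has_real_derivative 0 + Sz 1 t - Sp 1 t) (at t)"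
      unfolding L'_def[abs_def] Sz_def Sp_def
      by (intro DERIV_diff DERIV_add DERIV_const deriv_ln_sum Sz_lt[OF that] Sp_lt[OF that])
    then show ?thesis unfolding G_def by simp
  qed
  have iter: "(deriv ^^ Suc j) L t = G j t" if "t \<in> S" for j t
    using that
  proof (induction j arbitrary: t)
    case 0
    have "(L has_real_derivative G 0 t) (at t)"
      by (rule has_field_derivative_transform_within_open[OF L'der[OF 0] openS 0])
         (simp add: LL')
    then show ?case by (simp add: DERIV_imp_deriv)
  next
    case (Suc j)
    have "((deriv ^^ Suc j) L has_real_derivative G (Suc j) t) (at t)"
      by (rule has_field_derivative_transform_within_open[OF Gder[OF Suc.prems] openS Suc.prems])
         (rule Suc.IH[symmetric])
    then show ?case by (simp add: DERIV_imp_deriv)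
  qed
  show ?thesis unfolding log_compl_mono_def
  proof (intro allI impI conjI)
    fix s assume "sigma p < s"
    then have sS: "s \<in> S" by (rule sigS)
    show "0 < rat_fun K z p s" by (rule Hpos[OF sS])
    fix k :: nat assume "1 \<le> k"
    then obtain j where kj: "k = Suc j" by (cases k) auto
    have "Sz (Suc j) s \<le> Sp (Suc j) s"
    proof (cases "p = []")
      case True
      then have "z = []" using len by simp
      then show ?thesis using True unfolding Sz_def Sp_def by simp
    next
      case False
      then obtain x0 where x0: "x0 \<in> set p" by (cases p) auto
      have "x0 < s" using Sp_lt[OF sS] x0 by blast
      moreover have "0 < x0 + \<delta>" using posA[of x0] x0 A_def by blast
      ultimately have t: "0 < s + \<delta>" by linarith
      have P: "\<forall>a\<in>set (map (\<lambda>x. x + \<delta>) p). 0 < a \<and> a < s + \<delta>"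
        using Sp_lt[OF sS] posA A_def by auto
      have Z: "\<forall>a\<in>set (map (\<lambda>x. x + \<delta>) z). 0 < a \<and> a < s + \<delta>"
        using Sz_lt[OF sS] posA A_def by auto
      have pw: "\<forall>m. (\<Sum>a\<leftarrow>map (\<lambda>x. x + \<delta>) z. a ^ m) \<le> (\<Sum>a\<leftarrow>map (\<lambda>x. x + \<delta>) p. a ^ m)"
        using powsum by (simp add: o_def)
      have "(\<Sum>a\<leftarrow>map (\<lambda>x. x + \<delta>) z. 1 / (s + \<delta> - a) ^ Suc j)
          \<le> (\<Sum>a\<leftarrow>map (\<lambda>x. x + \<delta>) p. 1 / (s + \<delta> - a) ^ Suc j)"
        by (rule power_sum_ineq[OF t _ P Z pw]) simp
      then show ?thesis unfolding Sz_def Sp_def by (simp add: o_def)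
    qed
    moreover have "(deriv ^^ k) (\<lambda>t. ln (rat_fun K z p t)) s = G j s"
      using iter[OF sS, of j] unfolding kj L_def[abs_def] .
    ultimately show "0 \<le> (-1) ^ k * (deriv ^^ k) (\<lambda>t. ln (rat_fun K z p t)) s"
      unfolding kj G_def by (simp add: mult.assoc[symmetric] power_add[symmetric] mult_nonneg_nonpos)
  qed
qed

end
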